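(* Let $\mathcal X,\mathcal Y$ be finite sets, $\mathcal A$ an action set, $L:\mathcal Y\times\mathcal A\to\mathbb R$ a loss function, $d\ge0$ an integer and $f:\mathcal X\to\mathcal Y$ a function. Let $\{X_t\}$ be a process with values in $\mathcal X$ and $Y_t=f(X_{t-d})$. If $X_t\leftrightarrow X_{t-\mu}\leftrightarrow X_{t-\mu-\nu}$ is a Markov chain for all integers $\mu,\nu\ge0$, then $H_L(Y_t\mid X_{t-\delta})$ is (weakly) decreasing in $\delta$ for $0\le\delta<d$ and (weakly) increasing in $\delta$ for $\delta\ge d$. In addition, for any random variable $Z$ with values in $\mathcal X$, $$H_L(Y_t\mid X_{t-d})=H_L(Y_t\mid Y_t)\le H_L(Y_t\mid Z).$$
   Context: $H_L(Y\mid X)=\sum_xP_X(x)\min_{a\in\mathcal A}\mathbb E_{Y\sim P_{Y\mid X=x}}[L(Y,a)]$ is the $L$-conditional entropy (minima assumed attained). *)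

theory Defs
  imports "HOL-Probability.Probability"
begin

definition cond_risk :: "'w measure \<Rightarrow> ('y::finite \<Rightarrow> 'a \<Rightarrow> real) \<Rightarrow> ('w \<Rightarrow> 'y) \<Rightarrow> ('w \<Rightarrow> 'c) \<Rightarrow> 'c \<Rightarrow> 'a \<Rightarrow> real" where
  "cond_risk M L Y X x a =
     (\<Sum>y\<in>UNIV. measure M {w \<in> space M. Y w = y \<and> X w = x} / measure M {w \<in> space M. X w = x} * L y a)"

definition condH :: "'w measure \<Rightarrow> ('y::finite \<Rightarrow> 'a \<Rightarrow> real) \<Rightarrow> 'a set \<Rightarrow> ('w \<Rightarrow> 'y) \<Rightarrow> ('w \<Rightarrow> 'c::finite) \<Rightarrow> real" where
  "condH M L A Y X =
     (\<Sum>x\<in>UNIV. measure M {w \<in> space M. X w = x} * (INF a\<in>A. cond_risk M L Y X x a))"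

definition min_attained :: "'w measure \<Rightarrow> ('y::finite \<Rightarrow> 'a \<Rightarrow> real) \<Rightarrow> 'a set \<Rightarrow> ('w \<Rightarrow> 'y) \<Rightarrow> ('w \<Rightarrow> 'c) \<Rightarrow> bool" where
  "min_attained M L A Y X \<longleftrightarrow>
     (\<forall>x. measure M {w \<in> space M. X w = x} > 0 \<longrightarrow>
        (\<exists>a\<in>A. \<forall>b\<in>A. cond_risk M L Y X x a \<le> cond_risk M L Y X x b))"

text \<open>U <-> V <-> W is a Markov chain: U and W conditionally independent given V,
  i.e. P(u,w|v) = P(u|v) P(w|v), written multiplicatively.\<close>
definition markov_chain :: "'w measure \<Rightarrow> ('w \<Rightarrow> 'u) \<Rightarrow> ('w \<Rightarrow> 'v) \<Rightarrow> ('w \<Rightarrow> 'z) \<Rightarrow> bool" where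
  "markov_chain M U V W \<longleftrightarrow>
     (\<forall>u v z. measure M {w \<in> space M. U w = u \<and> V w = v \<and> W w = z} * measure M {w \<in> space M. V w = v}
        = measure M {w \<in> space M. U w = u \<and> V w = v} * measure M {w \<in> space M. V w = v \<and> W w = z})"

end

theory Submission
  imports Defs
begin

lemma sum_part:
  assumes P: "prob_space M" and Wm: "W \<in> measurable M (count_space UNIV)"
    and Q: "{w\<in>space M. Q w} \<in> sets M" and S: "finite S"
  shows "(\<Sum>c\<in>S. measure M {w\<in>space M. Q w \<and> W w = c}) = measure M {w\<in>space M. Q w \<and> W w \<in> S}"
proof -
  interpret prob_space M by fact
  have m: "\<And>c. {w\<in>space M. Q w \<and> W w = c} \<in> sets M"
  proof -
    fix c
    have "{w\<in>space M. Q w \<and> W w = c} = {w\<in>space M. Q w} \<inter> (W -` {c} \<inter> space M)" by auto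
    also have "\<dots> \<in> sets M" using Q measurable_sets[OF Wm, of "{c}"] by auto
    finally show "{w\<in>space M. Q w \<and> W w = c} \<in> sets M" .
  qed
  have "measure M (\<Union>c\<in>S. {w\<in>space M. Q w \<and> W w = c}) = (\<Sum>c\<in>S. measure M {w\<in>space M. Q w \<and> W w = c})"
    by (rule finite_measure_finite_Union) (use S m in \<open>auto simp: disjoint_family_on_def\<close>)
  moreover have "(\<Union>c\<in>S. {w\<in>space M. Q w \<and> W w = c}) = {w\<in>space M. Q w \<and> W w \<in> S}" by auto
  ultimately show ?thesis by simp
qed

lemma sets_eq:
  assumes "U \<in> measurable M (count_space UNIV)"
  shows "{w\<in>space M. U w = u} \<in> sets M"
proof -
  have "{w\<in>space M. U w = u} = U -` {u} \<inter> space M" by auto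
  thus ?thesis using measurable_sets[OF assms, of "{u}"] by auto
qed

lemma sets_eq2:
  assumes "U \<in> measurable M (count_space UNIV)" "V \<in> measurable M (count_space UNIV)"
  shows "{w\<in>space M. U w = u \<and> V w = v} \<in> sets M"
proof -
  have "{w\<in>space M. U w = u \<and> V w = v} = {w\<in>space M. U w = u} \<inter> {w\<in>space M. V w = v}" by auto
  thus ?thesis using sets_eq[OF assms(1)] sets_eq[OF assms(2)] by auto
qed

lemma mono_P:
  assumes "prob_space M" "B \<in> sets M" "\<And>w. w \<in> space M \<Longrightarrow> P w \<Longrightarrow> w \<in> B"
  shows "measure M {w\<in>space M. P w} \<le> measure M B"
proof -
  interpret prob_space M by fact
  show ?thesis using assms(2,3) by (intro finite_measure_mono) auto
qed


lemma dpi: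
  fixes Y :: "'w \<Rightarrow> 'y::finite" and V :: "'w \<Rightarrow> 'v::finite" and W :: "'w \<Rightarrow> 'c::finite"
  assumes P: "prob_space M"
    and Ym: "Y \<in> measurable M (count_space UNIV)"
    and Vm: "V \<in> measurable M (count_space UNIV)"
    and Wm: "W \<in> measurable M (count_space UNIV)"
    and mk: "markov_chain M Y V W"
    and aV: "min_attained M L A Y V" and aW: "min_attained M L A Y W"
  shows "condH M L A Y V \<le> condH M L A Y W"
proof -
  interpret prob_space M by fact
  define PV where "PV v = measure M {w \<in> space M. V w = v}" for v
  define PW where "PW c = measure M {w \<in> space M. W w = c}" for c
  define PYV where "PYV y v = measure M {w\<in>space M. Y w = y \<and> V w = v}" for y v
  define PYW where "PYW y c = measure M {w\<in>space M. Y w = y \<and> W w = c}" for y c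
  define PVW where "PVW v c = measure M {w\<in>space M. V w = v \<and> W w = c}" for v c
  define PYVW where "PYVW y v c = measure M {w\<in>space M. Y w = y \<and> V w = v \<and> W w = c}" for y v c
  define RV where "RV v a = cond_risk M L Y V v a" for v a
  define m where "m v = (INF a\<in>A. RV v a)" for v
  have RV: "RV v a = (\<Sum>y\<in>UNIV. PYV y v / PV v * L y a)" for v a
    unfolding RV_def cond_risk_def PYV_def PV_def ..
  have a: "PYW y c = (\<Sum>v\<in>UNIV. PYVW y v c)" for y c
  proof -
    have "(\<Sum>v\<in>UNIV. measure M {w\<in>space M. (Y w = y \<and> W w = c) \<and> V w = v}) = measure M {w\<in>space M. (Y w = y \<and> W w = c) \<and> V w \<in> UNIV}"
      by (rule sum_part[OF P Vm]) (use sets_eq2[OF Ym Wm] in auto)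
    moreover have "\<And>v. {w\<in>space M. (Y w = y \<and> W w = c) \<and> V w = v} = {w\<in>space M. Y w = y \<and> V w = v \<and> W w = c}" by auto
    ultimately show ?thesis unfolding PYW_def PYVW_def by simp
  qed
  have b: "(\<Sum>c\<in>UNIV. PVW v c) = PV v" for v
    using sum_part[OF P Wm sets_eq[OF Vm, of v], of UNIV] unfolding PVW_def PV_def by simp
  have c1: "PYVW y v c \<le> PV v" for y v c
    unfolding PYVW_def PV_def by (rule mono_P[OF P sets_eq[OF Vm]]) auto
  have c2: "PVW v c \<le> PW c" for v c
    unfolding PVW_def PW_def by (rule mono_P[OF P sets_eq[OF Wm]]) auto
  have c3: "PVW v c \<le> PV v" for v c
    unfolding PVW_def PV_def by (rule mono_P[OF P sets_eq[OF Vm]]) auto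
  have d: "PYVW y v c = PYV y v / PV v * PVW v c" for y v c
  proof (cases "PV v = 0")
    case True
    then show ?thesis using c1[of y v c] measure_nonneg[of M "{w\<in>space M. Y w = y \<and> V w = v \<and> W w = c}"] by (simp add: PYVW_def)
  next
    case False
    have "PYVW y v c * PV v = PYV y v * PVW v c"
      using mk unfolding markov_chain_def PYVW_def PV_def PYV_def PVW_def by blast
    then show ?thesis using False by (simp add: field_simps)
  qed
  have key: "PW c * (INF a\<in>A. cond_risk M L Y W c a) \<ge> (\<Sum>v\<in>UNIV. PVW v c * m v)" for c
  proof (cases "PW c > 0")
    case False
    then have "PW c = 0" using measure_nonneg[of M] unfolding PW_def by (metis less_eq_real_def)
    then have "PVW v c = 0" for v using c2[of v c] measure_nonneg[of M] unfolding PVW_def by (metis order_antisym)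
    then show ?thesis using \<open>PW c = 0\<close> by simp
  next
    case True
    then obtain a where aA: "a \<in> A" and amin: "\<And>b. b \<in> A \<Longrightarrow> cond_risk M L Y W c a \<le> cond_risk M L Y W c b"
      using aW unfolding min_attained_def PW_def by blast
    have "(INF a\<in>A. cond_risk M L Y W c a) = cond_risk M L Y W c a"
      by (rule cInf_eq_minimum) (use aA amin in auto)
    then have "PW c * (INF a\<in>A. cond_risk M L Y W c a) = (\<Sum>y\<in>UNIV. PYW y c * L y a)"
      using True unfolding cond_risk_def PW_def PYW_def by (simp add: sum_distrib_left)
    also have "\<dots> = (\<Sum>y\<in>UNIV. \<Sum>v\<in>UNIV. PYV y v / PV v * PVW v c * L y a)"
      by (simp add: a d sum_distrib_right)
    also have "\<dots> = (\<Sum>v\<in>UNIV. PVW v c * RV v a)"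
      by (subst sum.swap) (simp add: RV sum_distrib_left mult_ac)
    also have "\<dots> \<ge> (\<Sum>v\<in>UNIV. PVW v c * m v)"
    proof (rule sum_mono)
      fix v
      have nn: "PVW v c \<ge> 0" unfolding PVW_def by simp
      show "PVW v c * m v \<le> PVW v c * RV v a"
      proof (cases "PV v > 0")
        case False
        then have "PVW v c = 0" using c3[of v c] nn measure_nonneg[of M "{w \<in> space M. V w = v}"] unfolding PV_def by linarith
        then show ?thesis by simp
      next
        case True
        then obtain b where bA: "b \<in> A" and bmin: "\<And>b'. b' \<in> A \<Longrightarrow> RV v b \<le> RV v b'"
          using aV unfolding min_attained_def PV_def RV_def by blast
        have "m v = RV v b" unfolding m_def
          by (rule cInf_eq_minimum) (use bA bmin in auto)
        then have "m v \<le> RV v a" using bmin[OF aA] by simp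
        then show ?thesis using nn by (rule mult_left_mono)
      qed
    qed
    finally show ?thesis .
  qed
  have "condH M L A Y W \<ge> (\<Sum>c\<in>UNIV. \<Sum>v\<in>UNIV. PVW v c * m v)"
    unfolding condH_def PW_def[symmetric] by (rule sum_mono) (rule key)
  also have "(\<Sum>c\<in>UNIV. \<Sum>v\<in>UNIV. PVW v c * m v) = (\<Sum>v\<in>UNIV. PV v * m v)"
    by (subst sum.swap) (simp add: b[symmetric] sum_distrib_right)
  also have "\<dots> = condH M L A Y V"
    unfolding condH_def PV_def m_def RV_def ..
  finally show ?thesis .
qed


lemma mc_sym:
  assumes "markov_chain M U V W" shows "markov_chain M W V U"
  unfolding markov_chain_def
proof (intro allI)
  fix u v z
  have "measure M {w \<in> space M. U w = z \<and> V w = v \<and> W w = u} * measure M {w \<in> space M. V w = v}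
        = measure M {w \<in> space M. U w = z \<and> V w = v} * measure M {w \<in> space M. V w = v \<and> W w = u}"
    using assms unfolding markov_chain_def by blast
  moreover have "{w \<in> space M. U w = z \<and> V w = v \<and> W w = u} = {w \<in> space M. W w = u \<and> V w = v \<and> U w = z}" by auto
  moreover have "{w \<in> space M. U w = z \<and> V w = v} = {w \<in> space M. V w = v \<and> U w = z}" by auto
  moreover have "{w \<in> space M. V w = v \<and> W w = u} = {w \<in> space M. W w = u \<and> V w = v}" by auto
  ultimately show "measure M {w \<in> space M. W w = u \<and> V w = v \<and> U w = z} * measure M {w \<in> space M. V w = v}
        = measure M {w \<in> space M. W w = u \<and> V w = v} * measure M {w \<in> space M. V w = v \<and> U w = z}"
    by (simp add: mult_ac)
qed

lemma mc_YY:
  "markov_chain M Y Y Z"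
  unfolding markov_chain_def
proof (intro allI)
  fix u v z
  show "measure M {w \<in> space M. Y w = u \<and> Y w = v \<and> Z w = z} * measure M {w \<in> space M. Y w = v}
        = measure M {w \<in> space M. Y w = u \<and> Y w = v} * measure M {w \<in> space M. Y w = v \<and> Z w = z}"
  proof (cases "u = v")
    case False
    then have e: "{w \<in> space M. Y w = u \<and> Y w = v \<and> Z w = z} = {}" "{w \<in> space M. Y w = u \<and> Y w = v} = {}" by auto
    show ?thesis unfolding e by simp
  qed (simp add: mult_ac)
qed

lemma mc_fX:
  "markov_chain M (f \<circ> X) X (f \<circ> X)"
  unfolding markov_chain_def
proof (intro allI)
  fix u v z
  show "measure M {w \<in> space M. (f \<circ> X) w = u \<and> X w = v \<and> (f \<circ> X) w = z} * measure M {w \<in> space M. X w = v}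
        = measure M {w \<in> space M. (f \<circ> X) w = u \<and> X w = v} * measure M {w \<in> space M. X w = v \<and> (f \<circ> X) w = z}"
  proof (cases "f v = u \<and> f v = z")
    case True
    then have "{w \<in> space M. (f \<circ> X) w = u \<and> X w = v \<and> (f \<circ> X) w = z} = {w \<in> space M. X w = v}"
      "{w \<in> space M. (f \<circ> X) w = u \<and> X w = v} = {w \<in> space M. X w = v}"
      "{w \<in> space M. X w = v \<and> (f \<circ> X) w = z} = {w \<in> space M. X w = v}" by auto
    then show ?thesis by simp
  next
    case False
    show ?thesis
    proof (cases "f v = u")
      case False
      then have e: "{w \<in> space M. (f \<circ> X) w = u \<and> X w = v \<and> (f \<circ> X) w = z} = {}"
        "{w \<in> space M. (f \<circ> X) w = u \<and> X w = v} = {}" by auto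
      show ?thesis unfolding e by simp
    next
      case True
      then have "f v \<noteq> z" using \<open>\<not> (f v = u \<and> f v = z)\<close> by simp
      then have e: "{w \<in> space M. (f \<circ> X) w = u \<and> X w = v \<and> (f \<circ> X) w = z} = {}"
        "{w \<in> space M. X w = v \<and> (f \<circ> X) w = z} = {}" by auto
      show ?thesis unfolding e by simp
    qed
  qed
qed

lemma mc_comp:
  fixes U :: "'w \<Rightarrow> 'u::finite"
  assumes P: "prob_space M" and Um: "U \<in> measurable M (count_space UNIV)"
    and Vm: "V \<in> measurable M (count_space UNIV)" and Wm: "W \<in> measurable M (count_space UNIV)"
    and mk: "markov_chain M U V W"
  shows "markov_chain M (f \<circ> U) V W"
  unfolding markov_chain_def
proof (intro allI)
  fix y v z
  define S where "S = {u. f u = y}"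
  have e1: "measure M {w \<in> space M. (f \<circ> U) w = y \<and> V w = v \<and> W w = z}
      = (\<Sum>u\<in>S. measure M {w \<in> space M. U w = u \<and> V w = v \<and> W w = z})"
  proof -
    have "(\<Sum>u\<in>S. measure M {w \<in> space M. (V w = v \<and> W w = z) \<and> U w = u}) = measure M {w \<in> space M. (V w = v \<and> W w = z) \<and> U w \<in> S}"
      by (rule sum_part[OF P Um]) (use sets_eq2[OF Vm Wm] in auto)
    moreover have "\<And>u. {w \<in> space M. (V w = v \<and> W w = z) \<and> U w = u} = {w \<in> space M. U w = u \<and> V w = v \<and> W w = z}" by auto
    moreover have "{w \<in> space M. (V w = v \<and> W w = z) \<and> U w \<in> S} = {w \<in> space M. (f \<circ> U) w = y \<and> V w = v \<and> W w = z}"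
      by (auto simp: S_def)
    ultimately show ?thesis by simp
  qed
  have e2: "measure M {w \<in> space M. (f \<circ> U) w = y \<and> V w = v}
      = (\<Sum>u\<in>S. measure M {w \<in> space M. U w = u \<and> V w = v})"
  proof -
    have "(\<Sum>u\<in>S. measure M {w \<in> space M. V w = v \<and> U w = u}) = measure M {w \<in> space M. V w = v \<and> U w \<in> S}"
      by (rule sum_part[OF P Um]) (use sets_eq[OF Vm] in auto)
    moreover have "\<And>u. {w \<in> space M. V w = v \<and> U w = u} = {w \<in> space M. U w = u \<and> V w = v}" by auto
    moreover have "{w \<in> space M. V w = v \<and> U w \<in> S} = {w \<in> space M. (f \<circ> U) w = y \<and> V w = v}"
      by (auto simp: S_def)
    ultimately show ?thesis by simp
  qed
  show "measure M {w \<in> space M. (f \<circ> U) w = y \<and> V w = v \<and> W w = z} * measure M {w \<in> space M. V w = v}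
      = measure M {w \<in> space M. (f \<circ> U) w = y \<and> V w = v} * measure M {w \<in> space M. V w = v \<and> W w = z}"
    unfolding e1 e2 sum_distrib_right
    using mk unfolding markov_chain_def by simp
qed

theorem lemma4:
  fixes M :: "'w measure"
    and X :: "int \<Rightarrow> 'w \<Rightarrow> 'x::finite"
    and f :: "'x \<Rightarrow> 'y::finite"
    and L :: "'y \<Rightarrow> 'a \<Rightarrow> real"
    and A :: "'a set"
    and d :: nat
    and t :: int
    and Z :: "'w \<Rightarrow> 'x"
  assumes "prob_space M"
    and meas: "\<And>s. X s \<in> measurable M (count_space UNIV)"
    and Zmeas: "Z \<in> measurable M (count_space UNIV)"
    and markov: "\<And>s (\<mu>::nat) (\<nu>::nat). markov_chain M (X s) (X (s - int \<mu>)) (X (s - int \<mu> - int \<nu>))"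
    and att: "\<And>s u. min_attained M L A (f \<circ> X (s - int d)) (X u)"
    and attY: "\<And>s. min_attained M L A (f \<circ> X (s - int d)) (f \<circ> X (s - int d))"
    and attZ: "\<And>s. min_attained M L A (f \<circ> X (s - int d)) Z"
  shows "(\<forall>\<delta>1 \<delta>2. \<delta>1 \<le> \<delta>2 \<and> \<delta>2 < d \<longrightarrow>
            condH M L A (f \<circ> X (t - int d)) (X (t - int \<delta>2))
              \<le> condH M L A (f \<circ> X (t - int d)) (X (t - int \<delta>1)))
       \<and> (\<forall>\<delta>1 \<delta>2. d \<le> \<delta>1 \<and> \<delta>1 \<le> \<delta>2 \<longrightarrow>
            condH M L A (f \<circ> X (t - int d)) (X (t - int \<delta>1))
              \<le> condH M L A (f \<circ> X (t - int d)) (X (t - int \<delta>2)))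
       \<and> condH M L A (f \<circ> X (t - int d)) (X (t - int d))
           = condH M L A (f \<circ> X (t - int d)) (f \<circ> X (t - int d))
       \<and> condH M L A (f \<circ> X (t - int d)) (f \<circ> X (t - int d))
           \<le> condH M L A (f \<circ> X (t - int d)) Z"
  proof -
  note P = assms(1)
  define Y where "Y = f \<circ> X (t - int d)"
  have Ym: "Y \<in> measurable M (count_space UNIV)" unfolding Y_def
    using meas[of "t - int d"] by (simp add: measurable_comp[OF _ measurable_count_space])
  have attX: "\<And>u. min_attained M L A Y (X u)" unfolding Y_def using att[of t] by simp
  have attYY: "min_attained M L A Y Y" unfolding Y_def using attY[of t] by simp
  have attZZ: "min_attained M L A Y Z" unfolding Y_def using attZ[of t] by simp
  have p1: "condH M L A Y (X (t - int \<delta>2)) \<le> condH M L A Y (X (t - int \<delta>1))"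
    if "\<delta>1 \<le> \<delta>2" "\<delta>2 < d" for \<delta>1 \<delta>2
  proof -
    have "markov_chain M (X (t - int \<delta>1)) (X (t - int \<delta>1 - int (\<delta>2 - \<delta>1))) (X (t - int \<delta>1 - int (\<delta>2 - \<delta>1) - int (d - \<delta>2)))"
      by (rule markov)
    moreover have "t - int \<delta>1 - int (\<delta>2 - \<delta>1) = t - int \<delta>2" "t - int \<delta>2 - int (d - \<delta>2) = t - int d"
      using that by auto
    ultimately have "markov_chain M (X (t - int d)) (X (t - int \<delta>2)) (X (t - int \<delta>1))"
      by (metis mc_sym)
    then have "markov_chain M Y (X (t - int \<delta>2)) (X (t - int \<delta>1))"
      unfolding Y_def by (rule mc_comp[OF P meas meas meas])
    then show ?thesis by (rule dpi[OF P Ym meas meas _ attX attX])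
  qed
  have p2: "condH M L A Y (X (t - int \<delta>1)) \<le> condH M L A Y (X (t - int \<delta>2))"
    if "d \<le> \<delta>1" "\<delta>1 \<le> \<delta>2" for \<delta>1 \<delta>2
  proof -
    have "markov_chain M (X (t - int d)) (X (t - int d - int (\<delta>1 - d))) (X (t - int d - int (\<delta>1 - d) - int (\<delta>2 - \<delta>1)))"
      by (rule markov)
    moreover have "t - int d - int (\<delta>1 - d) = t - int \<delta>1" "t - int \<delta>1 - int (\<delta>2 - \<delta>1) = t - int \<delta>2"
      using that by auto
    ultimately have "markov_chain M (X (t - int d)) (X (t - int \<delta>1)) (X (t - int \<delta>2))"
      by metis
    then have "markov_chain M Y (X (t - int \<delta>1)) (X (t - int \<delta>2))"
      unfolding Y_def by (rule mc_comp[OF P meas meas meas])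
    then show ?thesis by (rule dpi[OF P Ym meas meas _ attX attX])
  qed
  have p3a: "condH M L A Y (X (t - int d)) \<le> condH M L A Y Y"
    by (rule dpi[OF P Ym meas Ym _ attX attYY]) (unfold Y_def, rule mc_fX)
  have p3b: "condH M L A Y Y \<le> condH M L A Y (X (t - int d))"
    by (rule dpi[OF P Ym Ym meas mc_YY attYY attX])
  have p4: "condH M L A Y Y \<le> condH M L A Y Z"
    by (rule dpi[OF P Ym Ym Zmeas mc_YY attYY attZZ])
  show ?thesis using p1 p2 p3a p3b p4 unfolding Y_def by (auto intro: order_antisym)
qed

end
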